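(* Fix $\varepsilon\in\{1,-1\}$, $m\in\{1,2,5,7,8,10,11,13,14,16,17,19,22,23\}$, and a nonnegative integer $n$ such that $\delta_m(n)$ is squarefree. With $A=18(m+24n)-\varepsilon$, $B=4\varepsilon/9$, $D=-3$, $r=1/3+A^2$, the number $J(m,n)=\frac{1}{64}(B^2D+2ABDr+A^2Dr^2+r^3)$ is an integer.
   Context: Let $f_m(n)=62208n^2+(5184m-432\varepsilon)n+(108m^2-18\varepsilon m+1)$, let $i=1$ if $m$ is odd, $i=2$ if $m$ is even and $m\ne8,16$, and $i=4$ if $m\in\{8,16\}$, and let $\delta_m(n)=2^{1-i}(m+24n)f_m(n)$. *)

theory Defs
  imports Complex_Main "HOL-Computational_Algebra.Squarefree"
begin

definition f_m :: "int \<Rightarrow> int \<Rightarrow> int \<Rightarrow> int" where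
  "f_m \<epsilon> m n = 62208 * n^2 + (5184 * m - 432 * \<epsilon>) * n + (108 * m^2 - 18 * \<epsilon> * m + 1)"

definition i_m :: "int \<Rightarrow> nat" where
  "i_m m = (if odd m then 1 else if m = 8 \<or> m = 16 then 4 else 2)"

(* delta_m(n) = 2^(1-i) (m+24n) f_m(n); for the admissible m this division is exact *)
definition delta_m :: "int \<Rightarrow> int \<Rightarrow> int \<Rightarrow> int" where
  "delta_m \<epsilon> m n = ((m + 24 * n) * f_m \<epsilon> m n) div 2 ^ (i_m m - 1)"

definition J_mn :: "int \<Rightarrow> int \<Rightarrow> int \<Rightarrow> rat" where
  "J_mn \<epsilon> m n =
    (let A = of_int (18 * (m + 24 * n) - \<epsilon>) :: rat;
         B = 4 * of_int \<epsilon> / 9 :: rat;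
         D = -3 :: rat;
         r = 1/3 + A^2
     in (B^2 * D + 2 * A * B * D * r + A^2 * D * r^2 + r^3) / 64)"

end

theory Submission
  imports Defs
begin

lemma p1: fixes x :: rat
  shows "4 * (((4/9)^2 * (-3) + 2 * (18*x-1) * (4/9) * (-3) * (1/3 + (18*x-1)^2) + (18*x-1)^2 * (-3) * (1/3 + (18*x-1)^2)^2 + (1/3 + (18*x-1)^2)^3) / 64)
   = x^2*(x+1)^2 + 4*(2*x - 142*x^2 + 3766*x^3 - 50848*x^4 + 354294*x^5 - 1062882*x^6)"
  by (simp add: field_simps) algebra

lemma p2: fixes x :: rat
  shows "4 * (((4*(-1)/9)^2 * (-3) + 2 * (18*x+1) * (4*(-1)/9) * (-3) * (1/3 + (18*x+1)^2) + (18*x+1)^2 * (-3) * (1/3 + (18*x+1)^2)^2 + (1/3 + (18*x+1)^2)^3) / 64)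
   = x^2*(x+1)^2 + 4*(- 2*x - 142*x^2 - 3767*x^3 - 50848*x^4 - 354294*x^5 - 1062882*x^6)"
  by (simp add: field_simps) algebra

lemma sq4: fixes k :: int shows "\<exists>t. k^2*(k+1)^2 = 4*t"
proof -
  obtain t where t: "k * (k + 1) = 2 * t" by (metis dvdE even_mult_iff even_plus_one_iff)
  have "k^2*(k+1)^2 = (k*(k+1))^2" by (simp add: power_mult_distrib)
  also have "\<dots> = 4 * t^2" using t by simp
  finally show ?thesis by blast
qed

lemma aux:
  fixes \<epsilon> k :: int
  assumes "\<epsilon> = 1 \<or> \<epsilon> = -1"
  shows "J_mn \<epsilon> k 0 \<in> \<int>"
proof -
  obtain t where t: "k^2*(k+1)^2 = 4*t" using sq4 by blast
  define x :: rat where "x = of_int k"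
  have tx: "x^2*(x+1)^2 = 4 * of_int t" unfolding x_def
    using arg_cong[OF t, of "of_int :: int \<Rightarrow> rat"] by simp
  from assms show ?thesis
  proof
    assume e: "\<epsilon> = 1"
    have "4 * J_mn \<epsilon> k 0 = x^2*(x+1)^2 + 4*(2*x - 142*x^2 + 3766*x^3 - 50848*x^4 + 354294*x^5 - 1062882*x^6)"
      unfolding p1[symmetric] J_mn_def Let_def e x_def by simp
    hence "J_mn \<epsilon> k 0 = of_int (t + (2*k - 142*k^2 + 3766*k^3 - 50848*k^4 + 354294*k^5 - 1062882*k^6))"
      using tx unfolding x_def by simp
    then show ?thesis by simp
  next
    assume e: "\<epsilon> = -1"
    have "4 * J_mn \<epsilon> k 0 = x^2*(x+1)^2 + 4*(- 2*x - 142*x^2 - 3767*x^3 - 50848*x^4 - 354294*x^5 - 1062882*x^6)"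
      unfolding p2[symmetric] J_mn_def Let_def e x_def by simp
    hence "J_mn \<epsilon> k 0 = of_int (t + (- 2*k - 142*k^2 - 3767*k^3 - 50848*k^4 - 354294*k^5 - 1062882*k^6))"
      using tx unfolding x_def by simp
    then show ?thesis by simp
  qed
qed

theorem lemma3p2:
  fixes \<epsilon> m n :: int
  assumes "\<epsilon> \<in> {1, -1}"
    and "m \<in> {1,2,5,7,8,10,11,13,14,16,17,19,22,23}"
    and "n \<ge> 0"
    and "squarefree (delta_m \<epsilon> m n)"
  shows "J_mn \<epsilon> m n \<in> \<int>"
proof -
  have "J_mn \<epsilon> m n = J_mn \<epsilon> (m + 24*n) 0" by (simp add: J_mn_def)
  moreover have "J_mn \<epsilon> (m + 24*n) 0 \<in> \<int>" using assms(1) by (intro aux) auto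
  ultimately show ?thesis by simp
qed

end
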